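(* Let $\rho>0$ be irrational and let $\Gamma_\rho\subset SL_2(\mathbb R)$ be the group generated by $\begin{pmatrix}1&1\\0&1\end{pmatrix}$ and $\begin{pmatrix}1&0\\\rho&1\end{pmatrix}$. Let $\left(\frac{p_n}{q_n}\right)_n$ be the sequence of continued fraction convergents of $\rho+1$. Then there is a constant $C>0$ (depending on $\rho$) such that for every $n$ there exist two distinct points $z_1,z_2$ of the orbit $\Gamma_\rho\binom{1}{0}$ with $\|z_1-z_2\|\le \frac{C}{q_{n+1}}$ and $\|z_1\|,\|z_2\|\le C\,q_nq_{n+1}$.
   Context: $\|\cdot\|$ is the Euclidean norm on $\mathbb R^2$; the group acts on $\mathbb R^2$ by matrix multiplication on column vectors. The convergents $p_n/q_n$ are the standard continued fraction convergents (in lowest terms, $q_n>0$). *)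

theory Defs
  imports "HOL-Analysis.Analysis"
begin

text \<open>Matrices act on column vectors; a matrix is written row by row.\<close>

definition upper_gen :: "real^2^2" where
  "upper_gen = vector [vector [1, 1], vector [0, 1]]"

definition lower_gen :: "real \<Rightarrow> real^2^2" where
  "lower_gen \<rho> = vector [vector [1, 0], vector [\<rho>, 1]]"

inductive_set Gamma :: "real \<Rightarrow> (real^2^2) set" for \<rho> :: real where
  id: "mat 1 \<in> Gamma \<rho>"
| mU: "A \<in> Gamma \<rho> \<Longrightarrow> A ** upper_gen \<in> Gamma \<rho>"
| mUi: "A \<in> Gamma \<rho> \<Longrightarrow> A ** matrix_inv upper_gen \<in> Gamma \<rho>"
| mL: "A \<in> Gamma \<rho> \<Longrightarrow> A ** lower_gen \<rho> \<in> Gamma \<rho>"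
| mLi: "A \<in> Gamma \<rho> \<Longrightarrow> A ** matrix_inv (lower_gen \<rho>) \<in> Gamma \<rho>"

definition orbit_e1 :: "real \<Rightarrow> (real^2) set" where
  "orbit_e1 \<rho> = (\<lambda>A. A *v vector [1, 0]) ` Gamma \<rho>"

fun cf_rem :: "real \<Rightarrow> nat \<Rightarrow> real" where
  "cf_rem x 0 = x"
| "cf_rem x (Suc n) = 1 / frac (cf_rem x n)"

definition cf_a :: "real \<Rightarrow> nat \<Rightarrow> int" where
  "cf_a x n = \<lfloor>cf_rem x n\<rfloor>"

fun cf_p :: "real \<Rightarrow> nat \<Rightarrow> int" where
  "cf_p x 0 = cf_a x 0"
| "cf_p x (Suc 0) = cf_a x 1 * cf_a x 0 + 1"
| "cf_p x (Suc (Suc n)) = cf_a x (n + 2) * cf_p x (Suc n) + cf_p x n"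

fun cf_q :: "real \<Rightarrow> nat \<Rightarrow> int" where
  "cf_q x 0 = 1"
| "cf_q x (Suc 0) = cf_a x 1"
| "cf_q x (Suc (Suc n)) = cf_a x (n + 2) * cf_q x (Suc n) + cf_q x n"

end

theory Submission
  imports Defs
begin

definition mk :: "real \<Rightarrow> real \<Rightarrow> real \<Rightarrow> real \<Rightarrow> real^2^2" where
  "mk a b c d = vector [vector [a, b], vector [c, d]]"

lemma mk_mult: "mk a b c d ** mk e f g h = mk (a*e+b*g) (a*f+b*h) (c*e+d*g) (c*f+d*h)"
  by (simp add: matrix_matrix_mult_def vec_eq_iff forall_2 sum_2 mk_def)

lemma mk_one: "mat 1 = mk 1 0 0 1"
  by (simp add: mat_def vec_eq_iff forall_2 mk_def)

lemma mk_vec: "mk a b c d *v vector [x, y] = vector [a*x+b*y, c*x+d*y]"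
  by (simp add: matrix_vector_mult_def vec_eq_iff forall_2 sum_2 mk_def)

lemma inv_eq:
  fixes A B :: "real^2^2"
  assumes "A ** B = mat 1" "B ** A = mat 1"
  shows "matrix_inv A = B"
proof -
  have ex: "\<exists>A'. A ** A' = mat 1 \<and> A' ** A = mat 1" using assms by blast
  obtain "A ** matrix_inv A = mat 1" "matrix_inv A ** A = mat 1"
    using someI_ex[OF ex] unfolding matrix_inv_def by blast
  then have "matrix_inv A = (B ** A) ** matrix_inv A" using assms by (simp add: matrix_mul_lid)
  also have "\<dots> = B" by (simp add: matrix_mul_assoc[symmetric] \<open>A ** matrix_inv A = mat 1\<close> matrix_mul_rid)
  finally show ?thesis .
qed

lemma U_mk: "upper_gen = mk 1 1 0 1" by (simp add: upper_gen_def mk_def)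
lemma L_mk: "lower_gen r = mk 1 0 r 1" by (simp add: lower_gen_def mk_def)
lemma Ui_mk: "matrix_inv upper_gen = mk 1 (-1) 0 1"
  by (rule inv_eq) (simp_all add: U_mk mk_mult mk_one)
lemma Li_mk: "matrix_inv (lower_gen r) = mk 1 0 (-r) 1"
  by (rule inv_eq) (simp_all add: L_mk mk_mult mk_one)

lemma Gamma_mult: "B \<in> Gamma r \<Longrightarrow> A \<in> Gamma r \<Longrightarrow> A ** B \<in> Gamma r"
proof (induction B rule: Gamma.induct)
  case id then show ?case by (simp add: matrix_mul_rid)
next
  case (mU B) show ?case using Gamma.mU[OF mU.IH[OF mU.prems]] by (simp add: matrix_mul_assoc)
next
  case (mUi B) show ?case using Gamma.mUi[OF mUi.IH[OF mUi.prems]] by (simp add: matrix_mul_assoc)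
next
  case (mL B) show ?case using Gamma.mL[OF mL.IH[OF mL.prems]] by (simp add: matrix_mul_assoc)
next
  case (mLi B) show ?case using Gamma.mLi[OF mLi.IH[OF mLi.prems]] by (simp add: matrix_mul_assoc)
qed

lemma U_pow: "mk 1 (of_int k) 0 1 \<in> Gamma r"
proof (induction k rule: int_induct[where k=0])
  case base then show ?case using Gamma.id by (simp add: mk_one)
next
  case (step1 i)
  from Gamma.mU[OF step1(2)] show ?case by (simp add: U_mk mk_mult add.commute)
next
  case (step2 i)
  from Gamma.mUi[OF step2(2)] show ?case by (simp add: Ui_mk mk_mult)
qed

lemma L_pow: "mk 1 0 (of_int k * r) 1 \<in> Gamma r"
proof (induction k rule: int_induct[where k=0])
  case base then show ?case using Gamma.id by (simp add: mk_one)
next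
  case (step1 i)
  from Gamma.mL[OF step1(2)] show ?case by (simp add: L_mk mk_mult algebra_simps)
next
  case (step2 i)
  from Gamma.mLi[OF step2(2)] show ?case by (simp add: Li_mk mk_mult algebra_simps)
qed


locale cfx =
  fixes x :: real
  assumes irr: "x \<notin> \<rat>"
begin

abbreviation "r \<equiv> cf_rem x"
abbreviation "a \<equiv> cf_a x"
abbreviation "P \<equiv> cf_p x"
abbreviation "Q \<equiv> cf_q x"

lemma r_Suc: "r (Suc n) = 1 / frac (r n)" by simp

declare cf_rem.simps(2)[simp del]

lemma r_irr: "r n \<notin> \<rat>"
proof (induction n)
  case 0 then show ?case using irr by simp
next
  case (Suc n)
  show ?case
  proof
    assume "r (Suc n) \<in> \<rat>"
    then have "inverse (r (Suc n)) \<in> \<rat>" by (rule Rats_inverse)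
    then have "frac (r n) \<in> \<rat>" by (simp add: divide_inverse r_Suc)
    then have "frac (r n) + of_int \<lfloor>r n\<rfloor> \<in> \<rat>" by (simp add: Rats_add)
    then show False using Suc by (simp add: frac_def)
  qed
qed

lemma frac_pos: "frac (r n) > 0"
proof -
  have "r n \<notin> \<int>" using r_irr Ints_subset_Rats by blast
  then have "frac (r n) \<noteq> 0" by (simp add: frac_eq_0_iff)
  then show ?thesis using frac_ge_0[of "r n"] by linarith
qed

lemma r_gt1: "r (Suc n) > 1"
  using frac_pos[of n] frac_lt_1[of "r n"] by (simp add: r_Suc field_simps)

lemma r_pos: "r (Suc n) > 0" using r_gt1[of n] by linarith

lemma a_ge1: "a (Suc n) \<ge> 1"
  using r_gt1[of n] unfolding cf_a_def by (simp add: one_le_floor)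

lemma r_split: "r n = of_int (a n) + 1 / r (Suc n)"
  using frac_pos[of n] by (simp add: cf_a_def frac_def r_Suc)

definition E :: "nat \<Rightarrow> real" where "E n = of_int (Q n) * x - of_int (P n)"

lemma E0: "E 0 = 1 / r 1"
  using r_split[of 0] by (simp add: E_def cf_a_def r_Suc frac_def)

lemma E_rec: "E (Suc n) = - E n / r (Suc (Suc n))"
proof (induction n rule: nat_less_induct)
  case (1 n)
  show ?case
  proof (cases n)
    case 0
    have "E 1 = of_int (a 1) * E 0 - 1" by (simp add: E_def algebra_simps)
    also have "\<dots> = E 0 * (of_int (a 1) - r 1)" using E0 r_pos[of 0] by (simp add: field_simps)
    also have "\<dots> = - E 0 / r 2" using r_split[of 1] by (simp add: numeral_2_eq_2)
    finally show ?thesis using 0 by (simp add: numeral_2_eq_2)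
  next
    case (Suc m)
    have IH: "E (Suc m) = - E m / r (Suc (Suc m))" using 1 Suc by simp
    have "E m = - r (Suc (Suc m)) * E (Suc m)" using IH r_pos[of "Suc m"] by (simp add: field_simps)
    have "E (Suc (Suc m)) = of_int (a (m+2)) * E (Suc m) + E m" by (simp add: E_def algebra_simps)
    also have "\<dots> = E (Suc m) * (of_int (a (m+2)) - r (Suc (Suc m)))"
      using \<open>E m = _\<close> by (simp add: algebra_simps)
    also have "\<dots> = - E (Suc m) / r (Suc (Suc (Suc m)))"
      using r_split[of "Suc (Suc m)"] by simp
    finally show ?thesis using Suc by simp
  qed
qed

definition Qp :: "nat \<Rightarrow> int" where "Qp n = (if n = 0 then 0 else Q (n - 1))"

lemma Q_rec: "Q (Suc n) = a (Suc n) * Q n + Qp n"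
proof (cases n)
  case 0 then show ?thesis by (simp add: Qp_def)
next
  case (Suc m) then show ?thesis by (simp add: Qp_def)
qed

lemma Q_mono: "1 \<le> Q n \<and> Q n \<le> Q (Suc n)"
proof (induction n)
  case 0 then show ?case using a_ge1[of 0] by simp
next
  case (Suc n)
  have "Q (Suc (Suc n)) = a (n+2) * Q (Suc n) + Q n" by simp
  moreover have "a (n+2) \<ge> 1" using a_ge1[of "Suc n"] by simp
  moreover have "Q (Suc n) \<le> a (n+2) * Q (Suc n)"
    using mult_right_mono[of 1 "a (n+2)" "Q (Suc n)"] Suc \<open>a (n+2) \<ge> 1\<close> by simp
  ultimately have "Q (Suc (Suc n)) \<ge> Q (Suc n) + Q n"
    using Suc by linarith
  then show ?case using Suc by linarith
qed

lemma Qp_le: "0 \<le> Qp n \<and> Qp n \<le> Q n"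
  using Q_mono[of "n-1"] by (cases n) (auto simp: Qp_def)

lemma absE: "\<bar>E n\<bar> * (of_int (Q n) * r (Suc n) + of_int (Qp n)) = 1"
proof (induction n)
  case 0 then show ?case using E0 r_pos[of 0] by (simp add: Qp_def)
next
  case (Suc n)
  have rp: "r (Suc (Suc n)) > 0" by (rule r_pos)
  have "\<bar>E (Suc n)\<bar> * (of_int (Q (Suc n)) * r (Suc (Suc n)) + of_int (Qp (Suc n)))
      = \<bar>E n\<bar> / r (Suc (Suc n)) * (of_int (Q (Suc n)) * r (Suc (Suc n)) + of_int (Q n))"
    using rp by (simp add: E_rec Qp_def abs_divide abs_minus)
  also have "\<dots> = \<bar>E n\<bar> * (of_int (Q (Suc n)) + of_int (Q n) / r (Suc (Suc n)))"
    using rp by (simp add: field_simps)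
  also have "\<dots> = \<bar>E n\<bar> * (of_int (a (Suc n)) * of_int (Q n) + of_int (Qp n) + of_int (Q n) / r (Suc (Suc n)))"
    by (simp add: Q_rec)
  also have "\<dots> = \<bar>E n\<bar> * (of_int (Q n) * r (Suc n) + of_int (Qp n))"
    using r_split[of "Suc n"] by (simp add: algebra_simps add_divide_distrib)
  finally show ?case using Suc by simp
qed

lemma E_bounds: "1 / (2 * of_int (Q (Suc n))) \<le> \<bar>E n\<bar> \<and> \<bar>E n\<bar> \<le> 1 / of_int (Q (Suc n))"
proof -
  define D where "D = of_int (Q n) * r (Suc n) + of_int (Qp n)"
  have Qn: "of_int (Q n) \<ge> (1::real)" using Q_mono[of n] by simp
  have Qn2: "Q n \<le> Q (Suc n)" using Q_mono[of n] by simp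
  have Qp: "0 \<le> Qp n" "Qp n \<le> Q n" using Qp_le[of n] by auto
  have ra: "of_int (a (Suc n)) \<le> r (Suc n)" "r (Suc n) < of_int (a (Suc n)) + 1"
    unfolding cf_a_def by linarith+
  have lo: "of_int (Q (Suc n)) \<le> D"
    unfolding D_def Q_rec using mult_left_mono[OF ra(1), of "of_int (Q n)"] Qn
    by (simp add: algebra_simps)
  have hi: "D \<le> 2 * of_int (Q (Suc n))"
  proof -
    have "D \<le> of_int (Q n) * (of_int (a (Suc n)) + 1) + of_int (Qp n)"
      unfolding D_def using mult_left_mono[OF less_imp_le[OF ra(2)], of "of_int (Q n)"] Qn by simp
    also have "\<dots> = of_int (Q (Suc n)) + of_int (Q n)" by (simp add: Q_rec algebra_simps)
    also have "\<dots> \<le> 2 * of_int (Q (Suc n))" using Qn2 by simp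
    finally show ?thesis .
  qed
  have Dpos: "D > 0" using lo Qn Qn2 by linarith
  have eq: "\<bar>E n\<bar> = 1 / D" using absE[of n] Dpos unfolding D_def[symmetric] by (simp add: field_simps)
  have Q1: "(0::real) < of_int (Q (Suc n))" using Qn Qn2 by linarith
  have b1: "1 / (2 * of_int (Q (Suc n))) \<le> 1 / D"
    by (rule divide_left_mono) (use hi Dpos Q1 in auto)
  have b2: "1 / D \<le> 1 / of_int (Q (Suc n))"
    by (rule divide_left_mono) (use lo Dpos Q1 in auto)
  show ?thesis unfolding eq using b1 b2 by blast
qed

end


lemma norm2: "norm (vector [a, b] :: real^2) \<le> \<bar>a\<bar> + \<bar>b\<bar>"
  using norm_le_l1_cart[of "vector [a, b] :: real^2"] by (simp add: sum_2)

theorem proposition1p4: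
  fixes \<rho> :: real
  assumes "\<rho> > 0" and "\<rho> \<notin> \<rat>"
  shows "\<exists>C>0. \<forall>n. \<exists>z1\<in>orbit_e1 \<rho>. \<exists>z2\<in>orbit_e1 \<rho>. z1 \<noteq> z2 \<and>
           norm (z1 - z2) \<le> C / real_of_int (cf_q (\<rho> + 1) (Suc n)) \<and>
           norm z1 \<le> C * real_of_int (cf_q (\<rho> + 1) n * cf_q (\<rho> + 1) (Suc n)) \<and>
           norm z2 \<le> C * real_of_int (cf_q (\<rho> + 1) n * cf_q (\<rho> + 1) (Suc n))"
proof -
  define x where "x = \<rho> + 1"
  have xirr: "x \<notin> \<rat>"
  proof
    assume "x \<in> \<rat>"
    then have "x - 1 \<in> \<rat>" by (simp add: Rats_diff)
    then show False using assms(2) by (simp add: x_def)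
  qed
  interpret cfx x using xirr by unfold_locales
  define C where "C = 1 + 4 * (x + 2) * \<rho> + 2 * \<rho>"
  have "0 < (x + 2) * \<rho>" using assms(1) by (simp add: x_def)
  then have Cpos: "C > 0" using assms(1) unfolding C_def by linarith
  have main: "\<exists>z1\<in>orbit_e1 \<rho>. \<exists>z2\<in>orbit_e1 \<rho>. z1 \<noteq> z2 \<and>
           norm (z1 - z2) \<le> C / real_of_int (Q (Suc n)) \<and>
           norm z1 \<le> C * real_of_int (Q n * Q (Suc n)) \<and>
           norm z2 \<le> C * real_of_int (Q n * Q (Suc n))" for n
  proof -
    define e where "e = E n"
    define q where "q = real_of_int (Q n)"
    define q1 where "q1 = real_of_int (Q (Suc n))"
    define k where "k = round (- 1 / e)"
    define K where "K = real_of_int k"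
    define R where "R = real_of_int (P n) + 1"
    have q: "q \<ge> 1" using Q_mono[of n] by (simp add: q_def)
    have q1: "q1 \<ge> 1" using Q_mono[of n] by (simp add: q1_def)
    have eb: "1 / (2 * q1) \<le> \<bar>e\<bar>" "\<bar>e\<bar> \<le> 1 / q1"
      using E_bounds[of n] by (simp_all add: e_def q1_def)
    have "1 / (2 * q1) > 0" using q1 by simp
    then have epos: "\<bar>e\<bar> > 0" using eb(1) by linarith
    have ene: "e \<noteq> 0" using epos by simp
    have "1 / q1 \<le> 1" using q1 by simp
    then have e1: "\<bar>e\<bar> \<le> 1" using eb(2) by linarith
    have inv_e: "\<bar>1 / e\<bar> \<le> 2 * q1"
    proof -
      have "1 \<le> 2 * q1 * \<bar>e\<bar>" using eb(1) q1 by (simp add: field_simps)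
      then have "1 / \<bar>e\<bar> \<le> 2 * q1" using epos by (simp add: field_simps)
      then show ?thesis by simp
    qed
    have Kr: "\<bar>K + 1 / e\<bar> \<le> 1/2"
      using of_int_round_abs_le[of "-1/e"] by (simp add: K_def k_def)
    have Kb: "\<bar>K\<bar> \<le> 3 * q1" using Kr inv_e q1 by linarith
    have e_def2: "e = q * x - (R - 1)" by (simp add: e_def E_def q_def R_def)
    have Rb: "\<bar>R\<bar> \<le> (x + 2) * q"
    proof -
      have "R = q * x - e + 1" using e_def2 by simp
      moreover have "q * x \<ge> 0" using q assms(1) by (simp add: x_def)
      ultimately have "\<bar>R\<bar> \<le> q * x + 2" using e1 by linarith
      also have "\<dots> \<le> (x + 2) * q" using q by (simp add: algebra_simps)
      finally show ?thesis .
    qed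
    have ke: "\<bar>1 + K * e\<bar> \<le> \<bar>e\<bar> / 2"
    proof -
      have "1 + K * e = e * (K + 1 / e)" using ene by (simp add: field_simps)
      then have "\<bar>1 + K * e\<bar> = \<bar>e\<bar> * \<bar>K + 1 / e\<bar>" by (simp add: abs_mult)
      also have "\<dots> \<le> \<bar>e\<bar> * (1/2)" by (rule mult_left_mono) (use Kr in auto)
      finally show ?thesis by simp
    qed
    define w1 :: "real^2" where "w1 = vector [1 + K * R * \<rho>, R * \<rho>]"
    define w2 :: "real^2" where "w2 = vector [x + K * \<rho> * (1 + q * x), \<rho> * (1 + q * x)]"
    have A1: "mk 1 K 0 1 ** mk 1 0 (real_of_int (P n + 1) * \<rho>) 1 \<in> Gamma \<rho>"
      unfolding K_def by (rule Gamma_mult[OF L_pow U_pow])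
    have A2: "((mk 1 K 0 1 ** mk 1 0 (real_of_int (Q n) * \<rho>) 1) ** mk 1 (real_of_int 1) 0 1)
               ** mk 1 0 (real_of_int 1 * \<rho>) 1 \<in> Gamma \<rho>"
      unfolding K_def by (intro Gamma_mult[OF L_pow] Gamma_mult[OF U_pow] Gamma_mult[OF L_pow U_pow])
    have w1o: "w1 \<in> orbit_e1 \<rho>"
    proof -
      have "w1 = (mk 1 K 0 1 ** mk 1 0 (real_of_int (P n + 1) * \<rho>) 1) *v vector [1, 0]"
        by (simp add: w1_def mk_mult mk_vec R_def algebra_simps)
      then show ?thesis using A1 unfolding orbit_e1_def by blast
    qed
    have w2o: "w2 \<in> orbit_e1 \<rho>"
    proof -
      have "w2 = (((mk 1 K 0 1 ** mk 1 0 (real_of_int (Q n) * \<rho>) 1) ** mk 1 (real_of_int 1) 0 1)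
               ** mk 1 0 (real_of_int 1 * \<rho>) 1) *v vector [1, 0]"
        by (simp add: w2_def mk_mult mk_vec q_def x_def algebra_simps)
      then show ?thesis using A2 unfolding orbit_e1_def by blast
    qed
    have D: "w1 - w2 = vector [- (\<rho> * (1 + K * e)), - (\<rho> * e)]"
      by (simp add: w1_def w2_def vec_eq_iff forall_2 e_def2 x_def algebra_simps)
    have ne: "w1 \<noteq> w2"
    proof
      assume "w1 = w2"
      then have "(w1 - w2) $ 2 = 0" by simp
      then show False using D ene assms(1) by simp
    qed
    have Db: "norm (w1 - w2) \<le> 2 * \<rho> * \<bar>e\<bar>"
    proof -
      have "norm (w1 - w2) \<le> \<bar>\<rho> * (1 + K * e)\<bar> + \<bar>\<rho> * e\<bar>"
        using norm2[of "- (\<rho> * (1 + K * e))" "- (\<rho> * e)"] unfolding D by simp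
      also have "\<dots> = \<rho> * \<bar>1 + K * e\<bar> + \<rho> * \<bar>e\<bar>" using assms(1) by (simp add: abs_mult)
      also have "\<dots> \<le> \<rho> * (\<bar>e\<bar> / 2) + \<rho> * \<bar>e\<bar>"
        using mult_left_mono[OF ke, of \<rho>] assms(1) by simp
      also have "\<dots> \<le> 2 * \<rho> * \<bar>e\<bar>" using assms(1) epos by simp
      finally show ?thesis .
    qed
    have Db2: "norm (w1 - w2) \<le> C / q1"
    proof -
      have "2 * \<rho> * \<bar>e\<bar> \<le> 2 * \<rho> * (1 / q1)"
        by (rule mult_left_mono) (use eb(2) assms(1) in auto)
      also have "\<dots> \<le> C / q1" using q1 assms(1)
        by (simp add: C_def x_def divide_right_mono)
      finally show ?thesis using Db by simp
    qed
    have KR: "\<bar>K\<bar> * \<bar>R\<bar> \<le> (3 * q1) * ((x + 2) * q)"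
      by (rule mult_mono) (use Kb Rb in auto)
    have qq1: "q \<le> q * q1" using mult_left_mono[of 1 q1 q] q q1 by simp
    have qq: "q \<le> q * q1" "1 \<le> q * q1" using qq1 q by linarith+
    have xpos: "x + 2 > 0" using assms(1) by (simp add: x_def)
    have w1b: "norm w1 \<le> (1 + 4 * (x + 2) * \<rho>) * (q * q1)"
    proof -
      have "norm w1 \<le> \<bar>1 + K * R * \<rho>\<bar> + \<bar>R * \<rho>\<bar>" unfolding w1_def by (rule norm2)
      also have "\<dots> \<le> 1 + \<bar>K\<bar> * \<bar>R\<bar> * \<rho> + \<bar>R\<bar> * \<rho>"
      proof -
        have "\<bar>K * R * \<rho>\<bar> = \<bar>K\<bar> * \<bar>R\<bar> * \<rho>" "\<bar>R * \<rho>\<bar> = \<bar>R\<bar> * \<rho>"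
          using assms(1) by (simp_all add: abs_mult)
        moreover have "\<bar>1 + K * R * \<rho>\<bar> \<le> 1 + \<bar>K * R * \<rho>\<bar>" by linarith
        ultimately show ?thesis by linarith
      qed
      also have "\<dots> \<le> 1 + (3 * q1) * ((x + 2) * q) * \<rho> + ((x + 2) * q) * \<rho>"
        using mult_right_mono[OF KR, of \<rho>] mult_right_mono[OF Rb, of \<rho>] assms(1) by linarith
      also have "\<dots> \<le> (q * q1) + 3 * (x + 2) * \<rho> * (q * q1) + (x + 2) * \<rho> * (q * q1)"
      proof -
        have "(x + 2) * \<rho> * q \<le> (x + 2) * \<rho> * (q * q1)"
          by (rule mult_left_mono[OF qq(1)]) (use xpos assms(1) in simp)
        moreover have "(3 * q1) * ((x + 2) * q) * \<rho> = 3 * (x + 2) * \<rho> * (q * q1)"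
          "((x + 2) * q) * \<rho> = (x + 2) * \<rho> * q" by (simp_all add: algebra_simps)
        ultimately show ?thesis using qq(2) by linarith
      qed
      also have "\<dots> = (1 + 4 * (x + 2) * \<rho>) * (q * q1)" by (simp add: algebra_simps)
      finally show ?thesis .
    qed
    have w1b2: "norm w1 \<le> C * (q * q1)"
      using w1b mult_right_mono[of "1 + 4 * (x + 2) * \<rho>" C "q * q1"] qq assms(1)
      by (simp add: C_def)
    have w2b: "norm w2 \<le> C * (q * q1)"
    proof -
      have "norm w2 \<le> norm w1 + norm (w1 - w2)" by (metis norm_triangle_sub norm_minus_commute)
      also have "\<dots> \<le> (1 + 4 * (x + 2) * \<rho>) * (q * q1) + 2 * \<rho> * (q * q1)"
      proof -
        have "2 * \<rho> * \<bar>e\<bar> \<le> 2 * \<rho> * 1" using e1 assms(1) by simp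
        also have "\<dots> \<le> 2 * \<rho> * (q * q1)" using qq assms(1) by simp
        finally show ?thesis using w1b Db by linarith
      qed
      also have "\<dots> = C * (q * q1)" by (simp add: C_def algebra_simps)
      finally show ?thesis .
    qed
    show ?thesis
      using w1o w2o ne Db2 w1b2 w2b by (auto simp: q_def q1_def)
  qed
  show ?thesis using Cpos main unfolding x_def by blast
qed

end
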